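(* Assume that $f_a(0)=\lim_{u\downarrow0}f_a(u)$ is finite for every $a\in A$. Let $\theta\in\mathbb R^n$ and $p^*\in\mathcal M_1^+(A)$ with $I(p^* )-\sum_j\theta_j\langle p^*,H_j\rangle$ finite. The following are equivalent: (1) $p^*$ satisfies the variational principle with parameters $\theta$; (2) there exist $\alpha\in\mathbb R$ and a subset $A_0\subseteq A$ such that (i) $f_a(p^*_a)=-\alpha-\sum_{j=1}^n\theta_jH_j(a)$ for all $a\in A\setminus A_0$; (ii) $p^*_a=0$ for all $a\in A_0$; (iii) $f_a(0)+\sum_{j=1}^n\theta_jH_j(a)\ge-\alpha$ for all $a\in A_0$.
   Context: Let $A$ be a finite or countable set and $\mathcal M_1^+(A)$ the set of probability distributions $p=(p_a)_{a\in A}$ on $A$. For each $a\in A$ let $h_a:[0,1]\to\mathbb R$ be continuous and strictly concave with $h_a(0)=h_a(1)=0$, differentiable on $(0,1)$ with $h_a'(u)=-f_a(u)$, where $f_a$ extends to a continuous (necessarily strictly increasing) function on $(0,1]$; put $f_a(0)=\lim_{u\downarrow0}f_a(u)\in[-\infty,\infty)$. The generalised entropy is $I(p)=\sum_{a\in A}h_a(p_a)\in[0,+\infty]$. Let $H_1,\dots,H_n:A\to\mathbb R$ be functions bounded from below, and write $\langle p,X\rangle=\sum_{a}p_aX(a)$. A distribution $p^*\in\mathcal M_1^+(A)$ satisfies the variational principle with parameters $\theta=(\theta_1,\dots,\theta_n)\in\mathbb R^n$ if $+\infty> I(p^* )-\sum_{j=1}^n\theta_j\langle p^*,H_j\rangle\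 \ge\ I(p)-\sum_{j=1}^n\theta_j\langle p,H_j\rangle$ for all $p\in\mathcal M_1^+(A)$. *)

theory Defs
  imports "HOL-Analysis.Analysis"
begin

definition strictly_concave_on :: "real set \<Rightarrow> (real \<Rightarrow> real) \<Rightarrow> bool" where
  "strictly_concave_on S g \<longleftrightarrow> convex S \<and>
     (\<forall>x\<in>S. \<forall>y\<in>S. x \<noteq> y \<longrightarrow> (\<forall>t. 0 < t \<and> t < 1 \<longrightarrow>
        g (t * x + (1 - t) * y) > t * g x + (1 - t) * g y))"

definition prob_dists :: "'a set \<Rightarrow> ('a \<Rightarrow> real) set" where
  "prob_dists A = {p. (\<forall>a\<in>A. 0 \<le> p a) \<and> (\<forall>a. a \<notin> A \<longrightarrow> p a = 0) \<and> (p has_sum 1) A}"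

text \<open>Sum over A of a real family with values in [-inf,+inf]; used only for families whose
  negative part is summable, so non-summability means divergence to +infinity.\<close>
definition esum :: "'a set \<Rightarrow> ('a \<Rightarrow> real) \<Rightarrow> ereal" where
  "esum A g = (if g summable_on A then ereal (infsum g A) else \<infinity>)"

text \<open>Generalised entropy I(p) = sum_a h_a(p_a) (terms are nonnegative).\<close>
definition gen_entropy :: "'a set \<Rightarrow> ('a \<Rightarrow> real \<Rightarrow> real) \<Rightarrow> ('a \<Rightarrow> real) \<Rightarrow> ereal" where
  "gen_entropy A h p = esum A (\<lambda>a. h a (p a))"

text \<open>Pairing <p,X> = sum_a p_a X(a) (X bounded below).\<close>
definition pairing :: "'a set \<Rightarrow> ('a \<Rightarrow> real) \<Rightarrow> ('a \<Rightarrow> real) \<Rightarrow> ereal" where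
  "pairing A p X = esum A (\<lambda>a. p a * X a)"

definition vp_terms :: "'a set \<Rightarrow> ('a \<Rightarrow> real \<Rightarrow> real) \<Rightarrow> nat \<Rightarrow> (nat \<Rightarrow> 'a \<Rightarrow> real)
    \<Rightarrow> (nat \<Rightarrow> real) \<Rightarrow> ('a \<Rightarrow> real) \<Rightarrow> ereal set" where
  "vp_terms A h n H \<theta> p = insert (gen_entropy A h p)
      ((\<lambda>j. - (ereal (\<theta> j) * pairing A p (H j))) ` {1..n})"

text \<open>The expression is well defined iff it is not of the form +inf - inf.\<close>
definition vp_defined where
  "vp_defined A h n H \<theta> p \<longleftrightarrow> \<not> (\<infinity> \<in> vp_terms A h n H \<theta> p \<and> - \<infinity> \<in> vp_terms A h n H \<theta> p)"

definition vp_value :: "'a set \<Rightarrow> ('a \<Rightarrow> real \<Rightarrow> real) \<Rightarrow> nat \<Rightarrow> (nat \<Rightarrow> 'a \<Rightarrow> real)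
    \<Rightarrow> (nat \<Rightarrow> real) \<Rightarrow> ('a \<Rightarrow> real) \<Rightarrow> ereal" where
  "vp_value A h n H \<theta> p = gen_entropy A h p - (\<Sum>j\<in>{1..n}. ereal (\<theta> j) * pairing A p (H j))"

definition variational_principle where
  "variational_principle A h n H \<theta> ps \<longleftrightarrow> ps \<in> prob_dists A \<and>
     \<bar>vp_value A h n H \<theta> ps\<bar> \<noteq> \<infinity> \<and>
     (\<forall>p\<in>prob_dists A. vp_defined A h n H \<theta> p \<longrightarrow>
        vp_value A h n H \<theta> p \<le> vp_value A h n H \<theta> ps)"

end

theory Submission
  imports Defs
begin


lemma f_right_lim:
  fixes f :: "real \<Rightarrow> real"
  assumes f_cont: "continuous_on {0<..1} f" and f_zero: "(f \<longlongrightarrow> f 0) (at_right 0)"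
    and x: "0 \<le> x" "x < 1"
  shows "(f \<longlongrightarrow> f x) (at_right x)"
proof (cases "x = 0")
  case True then show ?thesis using f_zero by simp
next
  case False
  then have x0: "0 < x" using x by simp
  have "continuous_on {0<..<1} f" using f_cont by (rule continuous_on_subset) auto
  then have "isCont f x" using x0 x by (simp add: continuous_on_eq_continuous_at)
  then have "(f \<longlongrightarrow> f x) (at x)" by (simp add: isCont_def)
  then show ?thesis by (rule tendsto_mono[OF at_le, rotated]) auto
qed

lemma f_left_lim:
  fixes f :: "real \<Rightarrow> real"
  assumes f_cont: "continuous_on {0<..1} f"
    and x: "0 < x" "x \<le> 1"
  shows "(f \<longlongrightarrow> f x) (at_left x)"
proof (cases "x = 1")
  case True
  have "continuous_on {1/2..1} f" using f_cont by (rule continuous_on_subset) auto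
  then have "(f \<longlongrightarrow> f 1) (at 1 within {1/2..1})"
    by (simp add: continuous_on_def)
  then show ?thesis using True at_within_Icc_at_left[of "1/2" "1::real"] by simp
next
  case False
  then have x1: "x < 1" using x by simp
  have "continuous_on {0<..<1} f" using f_cont by (rule continuous_on_subset) auto
  then have "isCont f x" using x x1 by (simp add: continuous_on_eq_continuous_at)
  then have "(f \<longlongrightarrow> f x) (at x)" by (simp add: isCont_def)
  then show ?thesis by (rule tendsto_mono[OF at_le, rotated]) auto
qed

lemma mvt_h:
  fixes h f :: "real \<Rightarrow> real"
  assumes cont: "continuous_on {0..1} h"
    and der: "\<forall>u\<in>{0<..<1}. (h has_real_derivative - f u) (at u)"
    and xy: "0 \<le> x" "x < y" "y \<le> 1"
  shows "\<exists>z. x < z \<and> z < y \<and> h y - h x = (y - x) * (- f z)"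
proof -
  have c: "continuous_on {x..y} h" using cont by (rule continuous_on_subset) (use xy in auto)
  have d: "\<And>z. x < z \<Longrightarrow> z < y \<Longrightarrow> h differentiable (at z)"
    using der xy real_differentiable_def by fastforce
  obtain l z where lz: "x < z" "z < y" "DERIV h z :> l" "h y - h x = (y - x) * l"
    using MVT[OF xy(2) c d] by blast
  have "DERIV h z :> - f z" using der lz xy by auto
  then have "l = - f z" using lz(3) DERIV_unique by blast
  then show ?thesis using lz by blast
qed

lemma right_deriv:
  fixes h f :: "real \<Rightarrow> real"
  assumes cont: "continuous_on {0..1} h"
    and der: "\<forall>u\<in>{0<..<1}. (h has_real_derivative - f u) (at u)"
    and flim: "(f \<longlongrightarrow> f x) (at_right x)"
    and x: "0 \<le> x" "x < 1"
  shows "((\<lambda>t. (h (x + t) - h x) / t) \<longlongrightarrow> - f x) (at_right 0)"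
proof -
  define \<xi> where "\<xi> t = (SOME z. x < z \<and> z < x + t \<and> h (x + t) - h x = t * (- f z))" for t
  have ev: "eventually (\<lambda>t. 0 < t \<and> t < 1 - x) (at_right (0::real))"
    unfolding eventually_at_right_field using x by (intro exI[of _ "1 - x"]) auto
  have xi: "x < \<xi> t \<and> \<xi> t < x + t \<and> h (x + t) - h x = t * (- f (\<xi> t))" if "0 < t" "t < 1 - x" for t
  proof -
    have "\<exists>z. x < z \<and> z < x + t \<and> h (x + t) - h x = (x + t - x) * (- f z)"
      by (rule mvt_h[OF cont der]) (use that x in auto)
    then have "\<exists>z. x < z \<and> z < x + t \<and> h (x + t) - h x = t * (- f z)" by simp
    then show ?thesis unfolding \<xi>_def by (rule someI_ex)
  qed
  have "(\<xi> \<longlongrightarrow> x) (at_right 0)"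
  proof (rule tendsto_sandwich[where f="\<lambda>t. x" and h="\<lambda>t. x + t"])
    show "eventually (\<lambda>t. x \<le> \<xi> t) (at_right 0)" using ev by eventually_elim (use xi in force)
    show "eventually (\<lambda>t. \<xi> t \<le> x + t) (at_right 0)" using ev by eventually_elim (use xi in force)
    show "((\<lambda>t. x + t) \<longlongrightarrow> x) (at_right 0)"
      by (rule tendsto_eq_intros | simp)+
  qed simp
  moreover have "eventually (\<lambda>t. \<xi> t \<in> {x<..} \<and> \<xi> t \<noteq> x) (at_right 0)"
    using ev by eventually_elim (use xi in force)
  ultimately have "filterlim \<xi> (at_right x) (at_right 0)"
    by (simp add: filterlim_at)
  then have "((\<lambda>t. f (\<xi> t)) \<longlongrightarrow> f x) (at_right 0)"
    using flim filterlim_compose by blast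
  then have "((\<lambda>t. - f (\<xi> t)) \<longlongrightarrow> - f x) (at_right 0)" by (rule tendsto_minus)
  moreover have "eventually (\<lambda>t. - f (\<xi> t) = (h (x + t) - h x) / t) (at_right 0)"
    using ev by eventually_elim (use xi in auto)
  ultimately show ?thesis by (rule Lim_transform_eventually)
qed

lemma left_deriv:
  fixes h f :: "real \<Rightarrow> real"
  assumes cont: "continuous_on {0..1} h"
    and der: "\<forall>u\<in>{0<..<1}. (h has_real_derivative - f u) (at u)"
    and flim: "(f \<longlongrightarrow> f x) (at_left x)"
    and x: "0 < x" "x \<le> 1"
  shows "((\<lambda>t. (h (x - t) - h x) / t) \<longlongrightarrow> f x) (at_right 0)"
proof -
  define \<xi> where "\<xi> t = (SOME z. x - t < z \<and> z < x \<and> h x - h (x - t) = t * (- f z))" for t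
  have ev: "eventually (\<lambda>t. 0 < t \<and> t < x) (at_right (0::real))"
    unfolding eventually_at_right_field using x by (intro exI[of _ "x"]) auto
  have xi: "x - t < \<xi> t \<and> \<xi> t < x \<and> h x - h (x - t) = t * (- f (\<xi> t))" if "0 < t" "t < x" for t
  proof -
    have "\<exists>z. x - t < z \<and> z < x \<and> h x - h (x - t) = (x - (x - t)) * (- f z)"
      by (rule mvt_h[OF cont der]) (use that x in auto)
    then have "\<exists>z. x - t < z \<and> z < x \<and> h x - h (x - t) = t * (- f z)" by simp
    then show ?thesis unfolding \<xi>_def by (rule someI_ex)
  qed
  have "(\<xi> \<longlongrightarrow> x) (at_right 0)"
  proof (rule tendsto_sandwich[where f="\<lambda>t. x - t" and h="\<lambda>t. x"])
    show "eventually (\<lambda>t. x - t \<le> \<xi> t) (at_right 0)" using ev by eventually_elim (use xi in force)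
    show "eventually (\<lambda>t. \<xi> t \<le> x) (at_right 0)" using ev by eventually_elim (use xi in force)
    show "((\<lambda>t. x - t) \<longlongrightarrow> x) (at_right 0)"
      by (rule tendsto_eq_intros | simp)+
  qed simp
  moreover have "eventually (\<lambda>t. \<xi> t \<in> {..<x} \<and> \<xi> t \<noteq> x) (at_right 0)"
    using ev by eventually_elim (use xi in force)
  ultimately have "filterlim \<xi> (at_left x) (at_right 0)"
    by (simp add: filterlim_at)
  then have "((\<lambda>t. f (\<xi> t)) \<longlongrightarrow> f x) (at_right 0)"
    using flim filterlim_compose by blast
  moreover have "eventually (\<lambda>t. f (\<xi> t) = (h (x - t) - h x) / t) (at_right 0)"
    using ev
  proof eventually_elim
    case (elim t)
    then have "h x - h (x - t) = t * (- f (\<xi> t))" using xi by blast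
    then show ?case using elim by (simp add: field_simps)
  qed
  ultimately show ?thesis by (rule Lim_transform_eventually)
qed

lemma scale_right_filterlim:
  fixes d :: real assumes "0 < d"
  shows "filterlim (\<lambda>s. s * d) (at_right 0) (at_right 0)"
proof -
  have "((\<lambda>s. s * d) \<longlongrightarrow> 0) (at_right 0)"
    by (rule tendsto_eq_intros | simp)+
  moreover have "eventually (\<lambda>s. s * d \<in> {0<..} \<and> s * d \<noteq> 0) (at_right (0::real))"
    using assms by (auto simp: eventually_at_right_field intro!: exI[of _ 1])
  ultimately show ?thesis by (simp add: filterlim_at)
qed

lemma tangent_ineq:
  fixes h f :: "real \<Rightarrow> real"
  assumes cont: "continuous_on {0..1} h"
    and conc: "strictly_concave_on {0..1} h"
    and der: "\<forall>u\<in>{0<..<1}. (h has_real_derivative - f u) (at u)"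
    and f_cont: "continuous_on {0<..1} f" and f_zero: "(f \<longlongrightarrow> f 0) (at_right 0)"
    and x: "0 \<le> x" "x \<le> 1" and y: "0 \<le> y" "y \<le> 1"
  shows "h y \<le> h x - f x * (y - x)"
proof -
  have cc: "h (t * a + (1 - t) * b) > t * h a + (1 - t) * h b"
    if "a \<in> {0..1}" "b \<in> {0..1}" "a \<noteq> b" "0 < t" "t < 1" for a b t
    using conc that unfolding strictly_concave_on_def by blast
  consider "x < y" | "y < x" | "x = y" by linarith
  then show ?thesis
  proof cases
    case 1
    define d where "d = y - x"
    have d: "0 < d" using 1 by (simp add: d_def)
    have R: "((\<lambda>t. (h (x + t) - h x) / t) \<longlongrightarrow> - f x) (at_right 0)"
      by (rule right_deriv[OF cont der f_right_lim[OF f_cont f_zero]]) (use x 1 y in auto)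
    have "((\<lambda>s. (h (x + s * d) - h x) / (s * d)) \<longlongrightarrow> - f x) (at_right 0)"
      using filterlim_compose[OF R scale_right_filterlim[OF d]] by simp
    then have L: "((\<lambda>s. d * ((h (x + s * d) - h x) / (s * d))) \<longlongrightarrow> d * (- f x)) (at_right 0)"
      by (rule tendsto_mult_left)
    have "eventually (\<lambda>s. h y - h x \<le> d * ((h (x + s * d) - h x) / (s * d))) (at_right 0)"
      unfolding eventually_at_right_field
    proof (intro exI[of _ 1] conjI allI impI)
      fix s :: real assume s: "0 < s" "s < 1"
      have "h (s * y + (1 - s) * x) > s * h y + (1 - s) * h x"
        by (rule cc) (use s x y 1 in auto)
      moreover have "s * y + (1 - s) * x = x + s * d" by (simp add: d_def algebra_simps)
      ultimately have "h (x + s * d) > s * h y + (1 - s) * h x" by metis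
      then have "h (x + s * d) - h x > s * (h y - h x)" by (simp add: algebra_simps)
      then have "(h (x + s * d) - h x) / s > h y - h x" using s by (simp add: field_simps)
      moreover have "d * ((h (x + s * d) - h x) / (s * d)) = (h (x + s * d) - h x) / s"
        using d s by (simp add: field_simps)
      ultimately show "h y - h x \<le> d * ((h (x + s * d) - h x) / (s * d))" by simp
    qed simp
    then have "h y - h x \<le> d * (- f x)"
      using tendsto_lowerbound[OF L] by simp
    then show ?thesis by (simp add: d_def algebra_simps)
  next
    case 2
    define d where "d = x - y"
    have d: "0 < d" using 2 by (simp add: d_def)
    have R: "((\<lambda>t. (h (x - t) - h x) / t) \<longlongrightarrow> f x) (at_right 0)"
      by (rule left_deriv[OF cont der f_left_lim[OF f_cont]]) (use x 2 y in auto)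
    have "((\<lambda>s. (h (x - s * d) - h x) / (s * d)) \<longlongrightarrow> f x) (at_right 0)"
      using filterlim_compose[OF R scale_right_filterlim[OF d]] by simp
    then have L: "((\<lambda>s. d * ((h (x - s * d) - h x) / (s * d))) \<longlongrightarrow> d * f x) (at_right 0)"
      by (rule tendsto_mult_left)
    have "eventually (\<lambda>s. h y - h x \<le> d * ((h (x - s * d) - h x) / (s * d))) (at_right 0)"
      unfolding eventually_at_right_field
    proof (intro exI[of _ 1] conjI allI impI)
      fix s :: real assume s: "0 < s" "s < 1"
      have "h (s * y + (1 - s) * x) > s * h y + (1 - s) * h x"
        by (rule cc) (use s x y 2 in auto)
      moreover have "s * y + (1 - s) * x = x - s * d" by (simp add: d_def algebra_simps)
      ultimately have "h (x - s * d) > s * h y + (1 - s) * h x" by metis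
      then have "h (x - s * d) - h x > s * (h y - h x)" by (simp add: algebra_simps)
      then have "(h (x - s * d) - h x) / s > h y - h x" using s by (simp add: field_simps)
      moreover have "d * ((h (x - s * d) - h x) / (s * d)) = (h (x - s * d) - h x) / s"
        using d s by (simp add: field_simps)
      ultimately show "h y - h x \<le> d * ((h (x - s * d) - h x) / (s * d))" by simp
    qed simp
    then have "h y - h x \<le> d * f x"
      using tendsto_lowerbound[OF L] by simp
    then show ?thesis by (simp add: d_def algebra_simps)
  qed simp
qed

lemma h_nonneg:
  fixes h :: "real \<Rightarrow> real"
  assumes conc: "strictly_concave_on {0..1} h" and ends: "h 0 = 0 \<and> h 1 = 0"
    and y: "0 \<le> y" "y \<le> 1"
  shows "0 \<le> h y"
proof -
  consider "y = 0" | "y = 1" | "0 < y \<and> y < 1" using y by linarith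
  then show ?thesis
  proof cases
    case 3
    from conc have "\<forall>a\<in>{0..1}. \<forall>b\<in>{0..1}. a \<noteq> b \<longrightarrow> (\<forall>t. 0 < t \<and> t < 1 \<longrightarrow>
        h (t * a + (1 - t) * b) > t * h a + (1 - t) * h b)"
      unfolding strictly_concave_on_def by blast
    note H = this[rule_format, of 1 0 y]
    have "h (y * 1 + (1 - y) * 0) > y * h 1 + (1 - y) * h 0"
      using 3 by (intro H) auto
    then show ?thesis using ends by simp
  qed (use ends in auto)
qed




lemma prob_two_le:
  assumes p: "p \<in> prob_dists A" and ab: "a \<in> A" "b \<in> A" "a \<noteq> b"
  shows "p a + p b \<le> 1"
proof -
  have s: "(p has_sum 1) A" and nn: "\<forall>x\<in>A. 0 \<le> p x" using p by (auto simp: prob_dists_def)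
  have "(p has_sum (sum p {a, b})) {a, b}" by (rule has_sum_finite) simp
  then have "sum p {a, b} \<le> 1"
    by (rule has_sum_mono_neutral[OF _ s]) (use ab nn in auto)
  then show ?thesis using ab by simp
qed

lemma prob_one_le:
  assumes p: "p \<in> prob_dists A" and a: "a \<in> A"
  shows "p a \<le> 1"
proof -
  have s: "(p has_sum 1) A" and nn: "\<forall>x\<in>A. 0 \<le> p x" using p by (auto simp: prob_dists_def)
  have "(p has_sum (sum p {a})) {a}" by (rule has_sum_finite) simp
  then have "sum p {a} \<le> 1"
    by (rule has_sum_mono_neutral[OF _ s]) (use a nn in auto)
  then show ?thesis by simp
qed

lemma has_sum_mod_two:
  fixes u v :: "'a \<Rightarrow> real"
  assumes ab: "a \<in> A" "b \<in> A" "a \<noteq> b" and uv: "\<And>x. x \<noteq> a \<Longrightarrow> x \<noteq> b \<Longrightarrow> v x = u x"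
    and u: "(u has_sum s) A"
  shows "(v has_sum (s + (v a - u a) + (v b - u b))) A"
proof -
  define w where "w x = v x - u x" for x
  have "(w has_sum (sum w {a, b})) {a, b}" by (rule has_sum_finite) simp
  then have "(w has_sum (sum w {a, b})) A"
    by (subst (asm) has_sum_cong_neutral[where T=A and g=w]) (use ab uv in \<open>auto simp: w_def\<close>)
  then have "(w has_sum (w a + w b)) A" using ab by simp
  from has_sum_add[OF u this] have "((\<lambda>x. u x + w x) has_sum (s + (w a + w b))) A" .
  moreover have "(\<lambda>x. u x + w x) = v" by (auto simp: w_def)
  ultimately show ?thesis by (simp add: w_def algebra_simps)
qed

lemma summable_mod_two:
  fixes u v :: "'a \<Rightarrow> real"
  assumes ab: "a \<in> A" "b \<in> A" "a \<noteq> b" and uv: "\<And>x. x \<noteq> a \<Longrightarrow> x \<noteq> b \<Longrightarrow> v x = u x"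
    and u: "u summable_on A"
  shows "v summable_on A" "infsum v A = infsum u A + (v a - u a) + (v b - u b)"
proof -
  have "(v has_sum (infsum u A + (v a - u a) + (v b - u b))) A"
    by (rule has_sum_mod_two[OF ab uv]) (use u in auto)
  then show "v summable_on A" "infsum v A = infsum u A + (v a - u a) + (v b - u b)"
    by (auto simp: has_sum_iff)
qed

lemma sum_Minfty_ereal:
  fixes x :: "'b \<Rightarrow> ereal"
  assumes "finite J" "\<forall>i\<in>J. x i \<noteq> \<infinity>" "j \<in> J" "x j = -\<infinity>"
  shows "(\<Sum>i\<in>J. x i) = -\<infinity>"
  using assms
proof (induction J rule: finite_induct)
  case (insert i F)
  have S: "(\<Sum>i\<in>F. x i) \<noteq> \<infinity>" using insert by (auto simp: sum_Pinfty)
  show ?case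
  proof (cases "i = j")
    case True then show ?thesis using insert S by simp
  next
    case False
    then have "(\<Sum>i\<in>F. x i) = -\<infinity>" using insert by auto
    then show ?thesis using insert by simp
  qed
qed simp

lemma ereal_sum_fin:
  fixes x :: "'b \<Rightarrow> ereal"
  assumes "finite J" "\<bar>\<Sum>i\<in>J. x i\<bar> \<noteq> \<infinity>" "j \<in> J"
  shows "\<bar>x j\<bar> \<noteq> \<infinity>"
proof -
  have "\<forall>i\<in>J. x i \<noteq> \<infinity>" using assms sum_Pinfty[of x J] by auto
  moreover have "x j \<noteq> -\<infinity>"
    using sum_Minfty_ereal[OF assms(1) calculation assms(3)] assms(2) by auto
  ultimately show ?thesis using assms(3) by auto
qed

lemma esum_ne_minf: "esum A g \<noteq> -\<infinity>"
  by (simp add: esum_def)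

lemma esum_summable: "g summable_on A \<Longrightarrow> esum A g = ereal (infsum g A)"
  by (simp add: esum_def)

lemma esum_not_summable: "\<not> g summable_on A \<Longrightarrow> esum A g = \<infinity>"
  by (simp add: esum_def)

lemma ereal0_mult[simp]: "ereal 0 * (x::ereal) = 0"
  by (simp add: zero_ereal_def[symmetric])

lemma term_real:
  assumes "t = 0 \<or> (\<lambda>a. p a * X a) summable_on A"
  shows "ereal t * pairing A p X = ereal (infsum (\<lambda>a. t * (p a * X a)) A)"
    and "(\<lambda>a. t * (p a * X a)) summable_on A"
  using assms
  by (auto simp: pairing_def esum_summable infsum_cmult_right summable_on_cmult_right)

lemma value_real:
  assumes hs: "(\<lambda>a. h a (p a)) summable_on A"
    and Hs: "\<forall>j\<in>{1..n}. \<theta> j = 0 \<or> (\<lambda>a. p a * H j a) summable_on A"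
  shows "vp_value A h n H \<theta> p = ereal (infsum (\<lambda>a. h a (p a)) A -
            (\<Sum>j\<in>{1..n}. infsum (\<lambda>a. \<theta> j * (p a * H j a)) A))"
    and "vp_defined A h n H \<theta> p"
proof -
  have E: "gen_entropy A h p = ereal (infsum (\<lambda>a. h a (p a)) A)"
    using hs by (simp add: gen_entropy_def esum_summable)
  have T: "\<And>j. j \<in> {1..n} \<Longrightarrow> ereal (\<theta> j) * pairing A p (H j) = ereal (infsum (\<lambda>a. \<theta> j * (p a * H j a)) A)"
    using Hs term_real by blast
  have "(\<Sum>j\<in>{1..n}. ereal (\<theta> j) * pairing A p (H j)) = (\<Sum>j\<in>{1..n}. ereal (infsum (\<lambda>a. \<theta> j * (p a * H j a)) A))"
    by (rule sum.cong) (use T in auto)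
  then show "vp_value A h n H \<theta> p = ereal (infsum (\<lambda>a. h a (p a)) A -
            (\<Sum>j\<in>{1..n}. infsum (\<lambda>a. \<theta> j * (p a * H j a)) A))"
    unfolding vp_value_def E by simp
  show "vp_defined A h n H \<theta> p"
    unfolding vp_defined_def vp_terms_def using E T by auto
qed

lemma value_fin:
  assumes fin: "\<bar>vp_value A h n H \<theta> p\<bar> \<noteq> \<infinity>"
  shows "(\<lambda>a. h a (p a)) summable_on A"
    and "\<forall>j\<in>{1..n}. \<theta> j = 0 \<or> (\<lambda>a. p a * H j a) summable_on A"
proof -
  define E where "E = gen_entropy A h p"
  define S where "S = (\<Sum>j\<in>{1..n}. ereal (\<theta> j) * pairing A p (H j))"
  have V: "vp_value A h n H \<theta> p = E - S" by (simp add: vp_value_def E_def S_def)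
  have Em: "E \<noteq> -\<infinity>" by (simp add: E_def gen_entropy_def esum_ne_minf)
  have Ep: "E \<noteq> \<infinity>"
  proof
    assume "E = \<infinity>" then have "E - S = \<infinity>" by simp
    then show False using fin V by simp
  qed
  have Sf: "\<bar>S\<bar> \<noteq> \<infinity>"
  proof
    assume "\<bar>S\<bar> = \<infinity>"
    then have "\<bar>E - S\<bar> = \<infinity>" using Em Ep by (cases E; cases S) auto
    then show False using fin V by simp
  qed
  show "(\<lambda>a. h a (p a)) summable_on A"
    using Ep by (auto simp: E_def gen_entropy_def esum_def split: if_splits)
  show "\<forall>j\<in>{1..n}. \<theta> j = 0 \<or> (\<lambda>a. p a * H j a) summable_on A"
  proof (intro ballI)
    fix j assume j: "j \<in> {1..n}"
    have "\<bar>ereal (\<theta> j) * pairing A p (H j)\<bar> \<noteq> \<infinity>"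
      using ereal_sum_fin[OF _ Sf[unfolded S_def] j] by simp
    then show "\<theta> j = 0 \<or> (\<lambda>a. p a * H j a) summable_on A"
      by (cases "(\<lambda>a. p a * H j a) summable_on A")
         (auto simp: pairing_def esum_not_summable split: if_splits)
  qed
qed

lemma has_sum_finsum:
  fixes F :: "'b \<Rightarrow> 'a \<Rightarrow> real"
  assumes "finite J" "\<And>j. j \<in> J \<Longrightarrow> (F j has_sum s j) A"
  shows "((\<lambda>a. \<Sum>j\<in>J. F j a) has_sum (\<Sum>j\<in>J. s j)) A"
  using assms
proof (induction J rule: finite_induct)
  case (insert i J)
  have "((\<lambda>a. F i a + (\<Sum>j\<in>J. F j a)) has_sum (s i + (\<Sum>j\<in>J. s j))) A"
    by (rule has_sum_add) (use insert in auto)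
  then show ?case using insert by simp
qed simp

lemma has_sum_diff':
  fixes f g :: "'a \<Rightarrow> real"
  assumes "(f has_sum x) A" "(g has_sum y) A"
  shows "((\<lambda>a. f a - g a) has_sum (x - y)) A"
proof -
  have "((\<lambda>a. - g a) has_sum (- y)) A" using assms(2) by (rule has_sum_uminusI)
  from has_sum_add[OF assms(1) this] show ?thesis by simp
qed




lemma summable_on_finsum:
  fixes F :: "'b \<Rightarrow> 'a \<Rightarrow> real"
  assumes "finite J" "\<And>j. j \<in> J \<Longrightarrow> F j summable_on A"
  shows "(\<lambda>a. \<Sum>j\<in>J. F j a) summable_on A"
  using has_sum_finsum[OF assms(1), where F=F and s="\<lambda>j. infsum (F j) A" and A=A] assms(2)
  by (auto simp: summable_on_def)

lemma summable_on_diff':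
  fixes f g :: "'a \<Rightarrow> real"
  assumes "f summable_on A" "g summable_on A"
  shows "(\<lambda>a. f a - g a) summable_on A"
  using has_sum_diff'[where f=f and A=A and g=g] assms by (auto simp: summable_on_def)

lemma kkt_imp_vp:
  fixes A :: "'a set" and h f :: "'a \<Rightarrow> real \<Rightarrow> real" and n :: nat
    and H :: "nat \<Rightarrow> 'a \<Rightarrow> real" and \<theta> :: "nat \<Rightarrow> real" and ps :: "'a \<Rightarrow> real"
  assumes h_cont: "\<forall>a\<in>A. continuous_on {0..1} (h a)"
    and h_conc: "\<forall>a\<in>A. strictly_concave_on {0..1} (h a)"
    and h_ends: "\<forall>a\<in>A. h a 0 = 0 \<and> h a 1 = 0"
    and h_deriv: "\<forall>a\<in>A. \<forall>u\<in>{0<..<1}. (h a has_real_derivative - f a u) (at u)"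
    and f_cont: "\<forall>a\<in>A. continuous_on {0<..1} (f a)"
    and f_zero: "\<forall>a\<in>A. (f a \<longlongrightarrow> f a 0) (at_right 0)"
    and H_bdd: "\<forall>j\<in>{1..n}. bdd_below (H j ` A)"
    and ps: "ps \<in> prob_dists A"
    and fin: "\<bar>vp_value A h n H \<theta> ps\<bar> \<noteq> \<infinity>"
    and i: "\<forall>a\<in>A - A0. f a (ps a) = - \<alpha> - (\<Sum>j\<in>{1..n}. \<theta> j * H j a)"
    and ii: "\<forall>a\<in>A0. ps a = 0"
    and iii: "\<forall>a\<in>A0. f a 0 + (\<Sum>j\<in>{1..n}. \<theta> j * H j a) \<ge> - \<alpha>"
  shows "variational_principle A h n H \<theta> ps"
proof -
  define G where "G a = (\<Sum>j\<in>{1..n}. \<theta> j * H j a)" for a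
  have psA: "\<forall>a\<in>A. 0 \<le> ps a \<and> ps a \<le> 1" using ps prob_one_le[OF ps] by (auto simp: prob_dists_def)
  have pw: "h a (p a) - G a * p a \<le> h a (ps a) - G a * ps a + \<alpha> * (p a - ps a)"
    if a: "a \<in> A" and pa: "0 \<le> p a" "p a \<le> 1" for a p
  proof -
    have t: "h a (p a) \<le> h a (ps a) - f a (ps a) * (p a - ps a)"
      by (rule tangent_ineq) (use a pa psA h_cont h_conc h_deriv f_cont f_zero in auto)
    show ?thesis
    proof (cases "a \<in> A0")
      case True
      then have z: "ps a = 0" and g: "f a 0 + G a \<ge> - \<alpha>" using ii iii by (auto simp: G_def)
      have "- f a 0 * p a \<le> (\<alpha> + G a) * p a"
        by (rule mult_right_mono) (use g pa in auto)
      then show ?thesis using t z by (simp add: algebra_simps)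
    next
      case False
      then have eq: "f a (ps a) = - \<alpha> - G a" using i a by (auto simp: G_def)
      have "h a (p a) \<le> h a (ps a) + (\<alpha> + G a) * (p a - ps a)" using t unfolding eq by (simp add: algebra_simps)
      then show ?thesis by (simp add: algebra_simps)
    qed
  qed
  have Gsum: "G a * q = (\<Sum>j\<in>{1..n}. \<theta> j * (q * H j a))" for a q
    by (simp add: G_def sum_distrib_left sum_distrib_right mult_ac)
  have hps: "(\<lambda>a. h a (ps a)) summable_on A"
    and Hps: "\<forall>j\<in>{1..n}. \<theta> j = 0 \<or> (\<lambda>a. ps a * H j a) summable_on A"
    using value_fin[OF fin] by auto
  have ps1: "(ps has_sum 1) A" using ps by (simp add: prob_dists_def)
  obtain c where c: "\<forall>j\<in>{1..n}. \<forall>a\<in>A. c j \<le> H j a"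
  proof -
    have "\<forall>j\<in>{1..n}. \<exists>m. \<forall>a\<in>A. m \<le> H j a"
      using H_bdd by (auto simp: bdd_below_def)
    then show ?thesis using that by metis
  qed
  show ?thesis unfolding variational_principle_def
  proof (intro conjI ps fin ballI impI)
    fix p assume p: "p \<in> prob_dists A" and def: "vp_defined A h n H \<theta> p"
    have pA: "\<forall>a\<in>A. 0 \<le> p a \<and> p a \<le> 1" using p prob_one_le[OF p] by (auto simp: prob_dists_def)
    have p1: "(p has_sum 1) A" using p by (simp add: prob_dists_def)
    show "vp_value A h n H \<theta> p \<le> vp_value A h n H \<theta> ps"
    proof (cases "\<exists>j\<in>{1..n}. \<theta> j > 0 \<and> \<not> (\<lambda>a. p a * H j a) summable_on A")
      case True
      then obtain j where j: "j \<in> {1..n}" "\<theta> j > 0" "\<not> (\<lambda>a. p a * H j a) summable_on A" by blast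
      have "ereal (\<theta> j) * pairing A p (H j) = \<infinity>"
        using j by (simp add: pairing_def esum_not_summable)
      then have "- \<infinity> \<in> vp_terms A h n H \<theta> p"
        unfolding vp_terms_def using j by force
      with def have ninf: "\<infinity> \<notin> vp_terms A h n H \<theta> p" by (simp add: vp_defined_def)
      then have E: "gen_entropy A h p \<noteq> \<infinity>" unfolding vp_terms_def by auto
      have E2: "gen_entropy A h p \<noteq> -\<infinity>" by (simp add: gen_entropy_def esum_ne_minf)
      have "(\<Sum>j\<in>{1..n}. ereal (\<theta> j) * pairing A p (H j)) = \<infinity>"
        using j \<open>ereal (\<theta> j) * pairing A p (H j) = \<infinity>\<close> by (subst sum_Pinfty) auto
      then have "vp_value A h n H \<theta> p = -\<infinity>"
        using E E2 unfolding vp_value_def by (cases "gen_entropy A h p") auto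
      then show ?thesis by simp
    next
      case False
      then have Hp_pos: "\<forall>j\<in>{1..n}. \<theta> j > 0 \<longrightarrow> (\<lambda>a. p a * H j a) summable_on A" by auto
      define tp where "tp j = max (\<theta> j) 0" for j
      define tm where "tm j = max (- \<theta> j) 0" for j
      define u where "u j a = (H j a - c j) * p a" for j a
      define R where "R a = h a (ps a) + \<alpha> * (p a - ps a) + (\<Sum>j\<in>{1..n}. tp j * u j a)
          + (\<Sum>j\<in>{1..n}. \<theta> j * c j) * p a - (\<Sum>j\<in>{1..n}. \<theta> j * (ps a * H j a))" for a
      define L where "L a = h a (p a) + (\<Sum>j\<in>{1..n}. tm j * u j a)" for a
      have u0: "\<forall>j\<in>{1..n}. \<forall>a\<in>A. 0 \<le> u j a"
        using c pA by (auto simp: u_def)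
      have tm0: "0 \<le> tm j" for j by (simp add: tm_def)
      have hp0: "\<forall>a\<in>A. 0 \<le> h a (p a)"
        using h_nonneg h_conc h_ends pA by blast
      have Gp: "G a * p a = (\<Sum>j\<in>{1..n}. tp j * u j a) - (\<Sum>j\<in>{1..n}. tm j * u j a)
                 + (\<Sum>j\<in>{1..n}. \<theta> j * c j) * p a" for a
      proof -
        have "G a * p a = (\<Sum>j\<in>{1..n}. tp j * u j a - tm j * u j a + \<theta> j * c j * p a)"
          unfolding G_def sum_distrib_right
        proof (rule sum.cong)
          fix j
          have "tp j - tm j = \<theta> j" by (simp add: tp_def tm_def max_def)
          then have "tp j * u j a - tm j * u j a = \<theta> j * (H j a - c j) * p a"
            by (simp add: u_def algebra_simps flip: \<open>tp j - tm j = \<theta> j\<close>)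
          then show "\<theta> j * H j a * p a = tp j * u j a - tm j * u j a + \<theta> j * c j * p a"
            by (simp add: algebra_simps)
        qed simp
        also have "\<dots> = (\<Sum>j\<in>{1..n}. tp j * u j a) - (\<Sum>j\<in>{1..n}. tm j * u j a)
                 + (\<Sum>j\<in>{1..n}. \<theta> j * c j) * p a"
          by (simp add: sum.distrib sum_subtractf sum_distrib_right)
        finally show ?thesis .
      qed
      have LR: "\<forall>a\<in>A. L a \<le> R a"
      proof
        fix a assume a: "a \<in> A"
        have "h a (p a) - G a * p a \<le> h a (ps a) - G a * ps a + \<alpha> * (p a - ps a)"
          using pw a pA by blast
        then show "L a \<le> R a" unfolding L_def R_def Gp Gsum[of a "ps a"] by simp
      qed
      have L0: "\<forall>a\<in>A. 0 \<le> L a"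
        unfolding L_def using hp0 u0 tm0 by (auto intro!: add_nonneg_nonneg sum_nonneg)
      have ps_s: "ps summable_on A" and p_s: "p summable_on A"
        using ps1 p1 by (auto simp: summable_on_def)
      have s2: "(\<lambda>a. \<alpha> * (p a - ps a)) summable_on A"
          using has_sum_diff'[OF p1 ps1] by (intro summable_on_cmult_right) (auto simp: summable_on_def)
      have s3: "(\<lambda>a. \<Sum>j\<in>{1..n}. tp j * u j a) summable_on A"
        proof (rule summable_on_finsum)
          fix j assume j: "j \<in> {1..n}"
          show "(\<lambda>a. tp j * u j a) summable_on A"
          proof (cases "\<theta> j > 0")
            case True
            then have "(\<lambda>a. p a * H j a) summable_on A" using Hp_pos j by auto
            moreover have "(\<lambda>a. c j * p a) summable_on A" using p_s by (rule summable_on_cmult_right)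
            ultimately have "(\<lambda>a. p a * H j a - c j * p a) summable_on A"
              by (rule summable_on_diff')
            then have "(\<lambda>a. u j a) summable_on A" by (simp add: u_def algebra_simps)
            then show ?thesis by (rule summable_on_cmult_right)
          next
            case False then show ?thesis by (simp add: tp_def)
          qed
        qed simp
      have s4: "(\<lambda>a. (\<Sum>j\<in>{1..n}. \<theta> j * c j) * p a) summable_on A"
          using p_s by (rule summable_on_cmult_right)
      have s5: "(\<lambda>a. \<Sum>j\<in>{1..n}. \<theta> j * (ps a * H j a)) summable_on A"
      proof (rule summable_on_finsum)
        fix j assume "j \<in> {1..n}"
        then show "(\<lambda>a. \<theta> j * (ps a * H j a)) summable_on A"
          using Hps by (intro term_real(2)) auto
      qed simp
      have Rs: "R summable_on A"
        unfolding R_def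
        by (rule summable_on_diff'[OF summable_on_add[OF summable_on_add[OF summable_on_add[OF hps s2] s3] s4] s5])
      have Ls: "L summable_on A"
        by (rule summable_on_comparison_test[OF Rs]) (use LR L0 in auto)
      have hp_s: "(\<lambda>a. h a (p a)) summable_on A"
        by (rule summable_on_comparison_test[OF Ls]) (use hp0 tm0 u0 in \<open>auto simp: L_def intro!: sum_nonneg\<close>)
      have Hp: "\<forall>j\<in>{1..n}. \<theta> j = 0 \<or> (\<lambda>a. p a * H j a) summable_on A"
      proof
        fix j assume j: "j \<in> {1..n}"
        consider "\<theta> j = 0" | "\<theta> j > 0" | "\<theta> j < 0" by linarith
        then show "\<theta> j = 0 \<or> (\<lambda>a. p a * H j a) summable_on A"
        proof cases
          case 2 then show ?thesis using Hp_pos j by auto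
        next
          case 3
          then have tmp: "tm j > 0" by (simp add: tm_def)
          have "(\<lambda>a. tm j * u j a) summable_on A"
          proof (rule summable_on_comparison_test[OF Ls])
            fix x assume x: "x \<in> A"
            have "tm j * u j x \<le> (\<Sum>j\<in>{1..n}. tm j * u j x)"
              by (rule member_le_sum) (use j u0 tm0 x in auto)
            moreover have "0 \<le> h x (p x)" using hp0 x by blast
            ultimately show "tm j * u j x \<le> L x" unfolding L_def by linarith
            show "0 \<le> tm j * u j x" using j u0 tm0 x by auto
          qed
          then have "(\<lambda>a. (1 / tm j) * (tm j * u j a)) summable_on A"
            by (rule summable_on_cmult_right)
          then have "(\<lambda>a. u j a) summable_on A" using tmp by simp
          moreover have "(\<lambda>a. c j * p a) summable_on A" using p_s by (rule summable_on_cmult_right)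
          ultimately have "(\<lambda>a. u j a + c j * p a) summable_on A" by (rule summable_on_add)
          then show ?thesis by (simp add: u_def algebra_simps)
        qed simp
      qed
      note Vp = value_real[where h=h and p=p and A=A, OF hp_s Hp]
      note Vps = value_real[where h=h and p=ps and A=A, OF hps Hps]
      have TS: "\<And>j. j \<in> {1..n} \<Longrightarrow> ((\<lambda>a. \<theta> j * (q a * H j a)) has_sum infsum (\<lambda>a. \<theta> j * (q a * H j a)) A) A"
        if "\<forall>j\<in>{1..n}. \<theta> j = 0 \<or> (\<lambda>a. q a * H j a) summable_on A" for q
        using that term_real(2) by (intro has_sum_infsum) blast
      have hl: "((\<lambda>a. h a (p a) - (\<Sum>j\<in>{1..n}. \<theta> j * (p a * H j a))) has_sum
          (infsum (\<lambda>a. h a (p a)) A - (\<Sum>j\<in>{1..n}. infsum (\<lambda>a. \<theta> j * (p a * H j a)) A))) A"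
        by (rule has_sum_diff'[OF has_sum_infsum[OF hp_s] has_sum_finsum]) (use TS[OF Hp] in auto)
      have hr: "((\<lambda>a. (h a (ps a) - (\<Sum>j\<in>{1..n}. \<theta> j * (ps a * H j a))) + \<alpha> * (p a - ps a)) has_sum
          ((infsum (\<lambda>a. h a (ps a)) A - (\<Sum>j\<in>{1..n}. infsum (\<lambda>a. \<theta> j * (ps a * H j a)) A)) + \<alpha> * (1 - 1))) A"
        by (rule has_sum_add[OF has_sum_diff'[OF has_sum_infsum[OF hps] has_sum_finsum]
              has_sum_cmult_right[OF has_sum_diff'[OF p1 ps1]]]) (use TS[OF Hps] in auto)
      have "infsum (\<lambda>a. h a (p a)) A - (\<Sum>j\<in>{1..n}. infsum (\<lambda>a. \<theta> j * (p a * H j a)) A)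
          \<le> (infsum (\<lambda>a. h a (ps a)) A - (\<Sum>j\<in>{1..n}. infsum (\<lambda>a. \<theta> j * (ps a * H j a)) A)) + \<alpha> * (1 - 1)"
      proof (rule has_sum_mono[OF hl hr])
        fix a assume a: "a \<in> A"
        show "h a (p a) - (\<Sum>j\<in>{1..n}. \<theta> j * (p a * H j a))
            \<le> (h a (ps a) - (\<Sum>j\<in>{1..n}. \<theta> j * (ps a * H j a))) + \<alpha> * (p a - ps a)"
          using pw[of a p] a pA unfolding Gsum by auto
      qed
      then show ?thesis unfolding Vp(1) Vps(1) by simp
    qed
  qed
qed




lemma vp_imp_kkt:
  fixes A :: "'a set" and h f :: "'a \<Rightarrow> real \<Rightarrow> real" and n :: nat
    and H :: "nat \<Rightarrow> 'a \<Rightarrow> real" and \<theta> :: "nat \<Rightarrow> real" and ps :: "'a \<Rightarrow> real"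
  assumes h_cont: "\<forall>a\<in>A. continuous_on {0..1} (h a)"
    and h_deriv: "\<forall>a\<in>A. \<forall>u\<in>{0<..<1}. (h a has_real_derivative - f a u) (at u)"
    and f_cont: "\<forall>a\<in>A. continuous_on {0<..1} (f a)"
    and f_zero: "\<forall>a\<in>A. (f a \<longlongrightarrow> f a 0) (at_right 0)"
    and ps: "ps \<in> prob_dists A"
    and fin: "\<bar>vp_value A h n H \<theta> ps\<bar> \<noteq> \<infinity>"
    and VP: "variational_principle A h n H \<theta> ps"
  shows "\<exists>\<alpha>::real. \<exists>A0. A0 \<subseteq> A \<and>
       (\<forall>a\<in>A - A0. f a (ps a) = - \<alpha> - (\<Sum>j\<in>{1..n}. \<theta> j * H j a)) \<and>
       (\<forall>a\<in>A0. ps a = 0) \<and>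
       (\<forall>a\<in>A0. f a 0 + (\<Sum>j\<in>{1..n}. \<theta> j * H j a) \<ge> - \<alpha>)"
proof -
  define G where "G a = (\<Sum>j\<in>{1..n}. \<theta> j * H j a)" for a
  define g where "g a = f a (ps a) + G a" for a
  have psA: "\<forall>a\<in>A. 0 \<le> ps a \<and> ps a \<le> 1" using ps prob_one_le[OF ps] by (auto simp: prob_dists_def)
  have ps1: "(ps has_sum 1) A" using ps by (simp add: prob_dists_def)
  have ps0: "\<forall>x. x \<notin> A \<longrightarrow> ps x = 0" using ps by (simp add: prob_dists_def)
  have hps: "(\<lambda>a. h a (ps a)) summable_on A"
    and Hps: "\<forall>j\<in>{1..n}. \<theta> j = 0 \<or> (\<lambda>a. ps a * H j a) summable_on A"
    using value_fin[OF fin] by auto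
  have VPle: "\<And>p. p \<in> prob_dists A \<Longrightarrow> vp_defined A h n H \<theta> p \<Longrightarrow>
      vp_value A h n H \<theta> p \<le> vp_value A h n H \<theta> ps"
    using VP by (auto simp: variational_principle_def)
  have key: "g a \<le> g b" if a: "a \<in> A" and b: "b \<in> A" and pa: "ps a > 0" for a b
  proof (rule ccontr)
    assume "\<not> g a \<le> g b"
    then have gt: "0 < g a - g b" by simp
    have ab: "a \<noteq> b" using gt by auto
    have s2: "ps a + ps b \<le> 1" by (rule prob_two_le[OF ps a b ab])
    have pb: "0 \<le> ps b" using psA b by auto
    have LA: "((\<lambda>t. (h a (ps a - t) - h a (ps a)) / t) \<longlongrightarrow> f a (ps a)) (at_right 0)"
      by (rule left_deriv[OF _ _ f_left_lim])  (use a h_cont h_deriv f_cont pa psA in auto)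
    have LB: "((\<lambda>t. (h b (ps b + t) - h b (ps b)) / t) \<longlongrightarrow> - f b (ps b)) (at_right 0)"
      by (rule right_deriv[OF _ _ f_right_lim]) (use b h_cont h_deriv f_cont f_zero pa pb s2 in auto)
    define D where "D t = (h a (ps a - t) - h a (ps a)) / t + (h b (ps b + t) - h b (ps b)) / t - (G b - G a)" for t
    have "(D \<longlongrightarrow> f a (ps a) + - f b (ps b) - (G b - G a)) (at_right 0)"
      unfolding D_def by (intro tendsto_diff tendsto_add LA LB tendsto_const)
    moreover have "f a (ps a) + - f b (ps b) - (G b - G a) = g a - g b" by (simp add: g_def)
    ultimately have lim: "(D \<longlongrightarrow> g a - g b) (at_right 0)" by simp
    have "eventually (\<lambda>t. D t > 0 \<and> (0 < t \<and> t \<le> ps a)) (at_right 0)"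
    proof (rule eventually_conj)
      show "eventually (\<lambda>t. D t > 0) (at_right 0)" using order_tendstoD(1)[OF lim gt] .
      show "eventually (\<lambda>t. 0 < t \<and> t \<le> ps a) (at_right (0::real))"
        unfolding eventually_at_right_field using pa by (intro exI[of _ "ps a"]) auto
    qed
    then obtain t where t: "D t > 0" "0 < t" "t \<le> ps a"
      using eventually_happens'[OF trivial_limit_at_right_real] by blast
    define p where "p = ps(a := ps a - t, b := ps b + t)"
    have pa': "p a = ps a - t" and pb': "p b = ps b + t" using ab by (auto simp: p_def)
    have pother: "\<And>x. x \<noteq> a \<Longrightarrow> x \<noteq> b \<Longrightarrow> p x = ps x" by (simp add: p_def)
    have "(p has_sum (1 + (p a - ps a) + (p b - ps b))) A"
      by (rule has_sum_mod_two[OF a b ab pother ps1])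
    then have p1: "(p has_sum 1) A" by (simp add: pa' pb')
    have pP: "p \<in> prob_dists A"
      unfolding prob_dists_def
    proof (intro CollectI conjI p1 allI impI ballI)
      fix x assume "x \<in> A" then show "0 \<le> p x"
        using psA t pb by (cases "x = a"; cases "x = b") (auto simp: pa' pb' pother)
    next
      fix x assume "x \<notin> A" then show "p x = 0"
        using a b ps0 pother by metis
    qed
    have hI: "(\<lambda>x. h x (p x)) summable_on A"
      "infsum (\<lambda>x. h x (p x)) A = infsum (\<lambda>x. h x (ps x)) A + (h a (p a) - h a (ps a)) + (h b (p b) - h b (ps b))"
      by (rule summable_mod_two[OF a b ab _ hps]; simp add: pother)+
    have Tj: "(\<theta> j = 0 \<or> (\<lambda>x. p x * H j x) summable_on A) \<and>
        infsum (\<lambda>x. \<theta> j * (p x * H j x)) A = infsum (\<lambda>x. \<theta> j * (ps x * H j x)) A + \<theta> j * (t * H j b - t * H j a)"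
      if j: "j \<in> {1..n}" for j
    proof (cases "\<theta> j = 0")
      case True then show ?thesis by simp
    next
      case False
      then have sj: "(\<lambda>x. ps x * H j x) summable_on A" using Hps j by auto
      have s1: "(\<lambda>x. p x * H j x) summable_on A"
        by (rule summable_mod_two(1)[OF a b ab _ sj]) (simp add: pother)
      have s2: "(\<lambda>x. \<theta> j * (ps x * H j x)) summable_on A" using sj by (rule summable_on_cmult_right)
      have "infsum (\<lambda>x. \<theta> j * (p x * H j x)) A = infsum (\<lambda>x. \<theta> j * (ps x * H j x)) A
          + (\<theta> j * (p a * H j a) - \<theta> j * (ps a * H j a)) + (\<theta> j * (p b * H j b) - \<theta> j * (ps b * H j b))"
        by (rule summable_mod_two(2)[OF a b ab _ s2]) (simp add: pother)
      then show ?thesis using s1 by (simp add: pa' pb' algebra_simps)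
    qed
    have Hp: "\<forall>j\<in>{1..n}. \<theta> j = 0 \<or> (\<lambda>x. p x * H j x) summable_on A" using Tj by blast
    note Vp = value_real[where h=h and p=p and A=A, OF hI(1) Hp]
    note Vps = value_real[where h=h and p=ps and A=A, OF hps Hps]
    have "(\<Sum>j\<in>{1..n}. infsum (\<lambda>x. \<theta> j * (p x * H j x)) A)
        = (\<Sum>j\<in>{1..n}. infsum (\<lambda>x. \<theta> j * (ps x * H j x)) A + \<theta> j * (t * H j b - t * H j a))"
      by (rule sum.cong) (use Tj in auto)
    also have "\<dots> = (\<Sum>j\<in>{1..n}. infsum (\<lambda>x. \<theta> j * (ps x * H j x)) A) + t * (G b - G a)"
      by (simp add: sum.distrib G_def sum_distrib_left sum_subtractf algebra_simps)
    finally have ST: "(\<Sum>j\<in>{1..n}. infsum (\<lambda>x. \<theta> j * (p x * H j x)) A)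
        = (\<Sum>j\<in>{1..n}. infsum (\<lambda>x. \<theta> j * (ps x * H j x)) A) + t * (G b - G a)" .
    have "t * D t > 0" using t by simp
    then have "t * D t = (h a (p a) - h a (ps a)) + (h b (p b) - h b (ps b)) - t * (G b - G a)"
      using t by (simp add: D_def pa' pb' field_simps)
    have "vp_value A h n H \<theta> p > vp_value A h n H \<theta> ps"
      unfolding Vp(1) Vps(1) hI(2) ST using \<open>t * D t > 0\<close> \<open>t * D t = _\<close> by simp
    moreover have "vp_value A h n H \<theta> p \<le> vp_value A h n H \<theta> ps"
      by (rule VPle[OF pP Vp(2)])
    ultimately show False by simp
  qed
  obtain a0 where a0: "a0 \<in> A" "ps a0 > 0"
  proof (rule ccontr)
    assume "\<not> thesis"
    then have "\<forall>a\<in>A. ps a = 0" using that psA by force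
    then have "(ps has_sum 0) A" by (intro has_sum_0) auto
    then show False using ps1 has_sum_unique by force
  qed
  show ?thesis
  proof (intro exI conjI)
    show "{a\<in>A. ps a = 0} \<subseteq> A" by auto
    show "\<forall>a\<in>A - {a\<in>A. ps a = 0}. f a (ps a) = - (- g a0) - (\<Sum>j\<in>{1..n}. \<theta> j * H j a)"
    proof
      fix a assume "a \<in> A - {a\<in>A. ps a = 0}"
      then have a: "a \<in> A" "ps a > 0" using psA by force+
      have "g a = g a0" using key[OF a(1) a0(1) a(2)] key[OF a0(1) a(1) a0(2)] by simp
      then show "f a (ps a) = - (- g a0) - (\<Sum>j\<in>{1..n}. \<theta> j * H j a)" by (simp add: g_def G_def)
    qed
    show "\<forall>a\<in>{a\<in>A. ps a = 0}. ps a = 0" by auto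
    show "\<forall>a\<in>{a\<in>A. ps a = 0}. f a 0 + (\<Sum>j\<in>{1..n}. \<theta> j * H j a) \<ge> - (- g a0)"
    proof
      fix a assume a: "a \<in> {a\<in>A. ps a = 0}"
      then have "g a0 \<le> g a" using key[OF a0(1) _ a0(2)] by blast
      then show "f a 0 + (\<Sum>j\<in>{1..n}. \<theta> j * H j a) \<ge> - (- g a0)" using a by (simp add: g_def G_def)
    qed
  qed
qed


theorem theorem2:
  fixes A :: "'a set" and h f :: "'a \<Rightarrow> real \<Rightarrow> real" and n :: nat
    and H :: "nat \<Rightarrow> 'a \<Rightarrow> real" and \<theta> :: "nat \<Rightarrow> real" and ps :: "'a \<Rightarrow> real"
  assumes countA: "countable A"
    and h_cont: "\<forall>a\<in>A. continuous_on {0..1} (h a)"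
    and h_conc: "\<forall>a\<in>A. strictly_concave_on {0..1} (h a)"
    and h_ends: "\<forall>a\<in>A. h a 0 = 0 \<and> h a 1 = 0"
    and h_deriv: "\<forall>a\<in>A. \<forall>u\<in>{0<..<1}. (h a has_real_derivative - f a u) (at u)"
    and f_cont: "\<forall>a\<in>A. continuous_on {0<..1} (f a)"
    and f_zero: "\<forall>a\<in>A. (f a \<longlongrightarrow> f a 0) (at_right 0)"
    and H_bdd: "\<forall>j\<in>{1..n}. bdd_below (H j ` A)"
    and ps: "ps \<in> prob_dists A"
    and fin: "\<bar>vp_value A h n H \<theta> ps\<bar> \<noteq> \<infinity>"
  shows "variational_principle A h n H \<theta> ps \<longleftrightarrow>
    (\<exists>\<alpha>::real. \<exists>A0. A0 \<subseteq> A \<and>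
       (\<forall>a\<in>A - A0. f a (ps a) = - \<alpha> - (\<Sum>j\<in>{1..n}. \<theta> j * H j a)) \<and>
       (\<forall>a\<in>A0. ps a = 0) \<and>
       (\<forall>a\<in>A0. f a 0 + (\<Sum>j\<in>{1..n}. \<theta> j * H j a) \<ge> - \<alpha>))"
  proof
  assume "variational_principle A h n H \<theta> ps"
  then show "\<exists>\<alpha>::real. \<exists>A0. A0 \<subseteq> A \<and>
       (\<forall>a\<in>A - A0. f a (ps a) = - \<alpha> - (\<Sum>j\<in>{1..n}. \<theta> j * H j a)) \<and>
       (\<forall>a\<in>A0. ps a = 0) \<and>
       (\<forall>a\<in>A0. f a 0 + (\<Sum>j\<in>{1..n}. \<theta> j * H j a) \<ge> - \<alpha>)"
    by (rule vp_imp_kkt[OF h_cont h_deriv f_cont f_zero ps fin])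
next
  assume "\<exists>\<alpha>::real. \<exists>A0. A0 \<subseteq> A \<and>
       (\<forall>a\<in>A - A0. f a (ps a) = - \<alpha> - (\<Sum>j\<in>{1..n}. \<theta> j * H j a)) \<and>
       (\<forall>a\<in>A0. ps a = 0) \<and>
       (\<forall>a\<in>A0. f a 0 + (\<Sum>j\<in>{1..n}. \<theta> j * H j a) \<ge> - \<alpha>)"
  then obtain \<alpha> A0 where i: "\<forall>a\<in>A - A0. f a (ps a) = - \<alpha> - (\<Sum>j\<in>{1..n}. \<theta> j * H j a)"
    and ii: "\<forall>a\<in>A0. ps a = 0" and iii: "\<forall>a\<in>A0. f a 0 + (\<Sum>j\<in>{1..n}. \<theta> j * H j a) \<ge> - \<alpha>"
    by blast
  show "variational_principle A h n H \<theta> ps"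
    by (rule kkt_imp_vp[OF h_cont h_conc h_ends h_deriv f_cont f_zero H_bdd ps fin i ii iii])
qed

end
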